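(* For any infinite word $w$ over a finite alphabet $A$ and any graph $H$ on $A$ with loops allowed, the class $\mathcal{X}=\mathcal{P}(w,H)$ has finite distinguishing number.
   Context: For positive integers $u_1<\dots<u_m$, $G_{w,H}(u_1,\dots,u_m)$ is the graph on $\{u_1,\dots,u_m\}$ in which $u_iu_j$ is an edge iff ($|u_i-u_j|=1$ and $w_{u_i}w_{u_j}\notin E(H)$) or ($|u_i-u_j|>1$ and $w_{u_i}w_{u_j}\in E(H)$) (for equal letters $a$, a loop at $a$). $\mathcal{P}(w,H)$ is the class of all graphs isomorphic to some $G_{w,H}(u_1,\dots,u_m)$. Distinguishing number: for $X\subseteq V(G)$, disjoint sets $U_1,\dots,U_m$ are distinguished by $X$ if vertices in the same $U_i$ have the same neighbourhood in $X$ and vertices in different $U_i$ have different neighbourhoods in $X$. $k_{\mathcal{X}}=\infty$ if for all $k,m$ some $G\in\mathcal{X}$ and $X\subseteq V(G)$ distinguish at least $m$ sets of size at least $k$; otherwise $k_{\mathcal{X}}$ is finite (the least $k$ such that for some $m$ no vertex subset of a graph in $\mathcal{X}$ distinguishes more than $m$ sets of size at least $k$). *)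

theory Defs
  imports Main
begin

text \<open>Vertices of graphs in a class are taken to be natural numbers (every finite
  graph is isomorphic to one on natural numbers).\<close>

type_synonym graph = "nat set \<times> (nat \<Rightarrow> nat \<Rightarrow> bool)"

definition dist_nat :: "nat \<Rightarrow> nat \<Rightarrow> nat" where
  "dist_nat u v = (if u \<le> v then v - u else u - v)"

definition wadj :: "(nat \<Rightarrow> 'a) \<Rightarrow> ('a \<Rightarrow> 'a \<Rightarrow> bool) \<Rightarrow> nat \<Rightarrow> nat \<Rightarrow> bool" where
  "wadj w H u v \<longleftrightarrow> u \<noteq> v \<and>
     ((dist_nat u v = 1 \<and> \<not> H (w u) (w v)) \<or> (dist_nat u v > 1 \<and> H (w u) (w v)))"

definition in_P :: "(nat \<Rightarrow> 'a) \<Rightarrow> ('a \<Rightarrow> 'a \<Rightarrow> bool) \<Rightarrow> graph \<Rightarrow> bool" where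
  "in_P w H G \<longleftrightarrow> (\<exists>U f. finite U \<and> U \<subseteq> {1..} \<and> bij_betw f (fst G) U \<and>
      (\<forall>x\<in>fst G. \<forall>y\<in>fst G. snd G x y \<longleftrightarrow> wadj w H (f x) (f y)))"

definition nbhd :: "graph \<Rightarrow> nat \<Rightarrow> nat set" where
  "nbhd G x = {y \<in> fst G. snd G x y}"

definition distinguishes :: "graph \<Rightarrow> nat set \<Rightarrow> (nat \<Rightarrow> nat set) \<Rightarrow> nat \<Rightarrow> bool" where
  "distinguishes G X U m \<longleftrightarrow>
     (\<forall>i<m. U i \<subseteq> fst G) \<and>
     (\<forall>i<m. \<forall>j<m. i \<noteq> j \<longrightarrow> U i \<inter> U j = {}) \<and>
     (\<forall>i<m. \<forall>x\<in>U i. \<forall>y\<in>U i. nbhd G x \<inter> X = nbhd G y \<inter> X) \<and>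
     (\<forall>i<m. \<forall>j<m. i \<noteq> j \<longrightarrow> (\<forall>x\<in>U i. \<forall>y\<in>U j. nbhd G x \<inter> X \<noteq> nbhd G y \<inter> X))"

definition finite_dist_number :: "(graph \<Rightarrow> bool) \<Rightarrow> bool" where
  "finite_dist_number C \<longleftrightarrow> (\<exists>k m::nat. \<forall>G n U X. C G \<and> X \<subseteq> fst G \<and> distinguishes G X U n \<and>
      (\<forall>i<n. card (U i) \<ge> k) \<longrightarrow> n \<le> m)"

end

theory Submission
  imports Defs
begin

theorem lemma3p5:
  fixes w :: "nat \<Rightarrow> 'a::finite" and H :: "'a \<Rightarrow> 'a \<Rightarrow> bool"
  assumes "symp H"
  shows "finite_dist_number (in_P w H)"
  unfolding finite_dist_number_def
proof (intro exI allI impI)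
  fix G n U X
  assume A: "in_P w H G \<and> X \<subseteq> fst G \<and> distinguishes G X U n \<and>
      (\<forall>i<n. card (U i) \<ge> 3 * card (UNIV::'a set) + 1)"
  then obtain V f where bij: "bij_betw f (fst G) V" and
    adj: "\<forall>x\<in>fst G. \<forall>y\<in>fst G. snd G x y \<longleftrightarrow> wadj w H (f x) (f y)"
    unfolding in_P_def by blast
  have injf: "inj_on f (fst G)" using bij bij_betw_def by blast
  have XV: "X \<subseteq> fst G" using A by blast
  have D: "distinguishes G X U n" using A by blast
  have UV: "\<forall>i<n. U i \<subseteq> fst G" using D unfolding distinguishes_def by blast
  have same: "\<forall>i<n. \<forall>x\<in>U i. \<forall>y\<in>U i. nbhd G x \<inter> X = nbhd G y \<inter> X"
    using D unfolding distinguishes_def by blast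
  have diff: "\<forall>i<n. \<forall>j<n. i \<noteq> j \<longrightarrow> (\<forall>x\<in>U i. \<forall>y\<in>U j. nbhd G x \<inter> X \<noteq> nbhd G y \<inter> X)"
    using D unfolding distinguishes_def by blast
  define N where "N a = {y\<in>X. H a (w (f y))}" for a
  have key: "\<exists>a. \<forall>x\<in>U i. nbhd G x \<inter> X = N a" if i: "i < n" for i
  proof -
    have ck: "card (U i) \<ge> 3 * card (UNIV::'a set) + 1" using A i by blast
    hence fin: "finite (U i)" by (metis card.infinite not_one_le_zero add_is_0 le_0_eq)
    have "U i \<noteq> {}" using ck by auto
    then obtain x0 where x0: "x0 \<in> U i" by blast
    define T where "T = nbhd G x0 \<inter> X"
    have sameT: "\<forall>x\<in>U i. nbhd G x \<inter> X = T" using same i x0 T_def by blast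
    show ?thesis
    proof (rule ccontr)
      assume nc: "\<not> ?thesis"
      have bound: "card {x\<in>U i. w (f x) = a} \<le> 3" for a
      proof -
        have "T \<noteq> N a" using nc sameT by auto
        moreover have "T \<subseteq> X" "N a \<subseteq> X" unfolding T_def N_def by auto
        ultimately obtain y0 where y0: "y0 \<in> X" "y0 \<in> T \<longleftrightarrow> y0 \<notin> N a" by blast
        have sub: "f ` {x\<in>U i. w (f x) = a} \<subseteq> {f y0 - 1, f y0, Suc (f y0)}"
        proof
          fix p assume "p \<in> f ` {x\<in>U i. w (f x) = a}"
          then obtain x where x: "x \<in> U i" "w (f x) = a" "p = f x" by blast
          have xV: "x \<in> fst G" using x UV i by blast
          have y0V: "y0 \<in> fst G" using y0 XV by blast
          have "y0 \<in> T \<longleftrightarrow> snd G x y0" using sameT x y0 y0V unfolding nbhd_def by blast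
          hence "wadj w H (f x) (f y0) \<longleftrightarrow> \<not> H a (w (f y0))"
            using adj xV y0V y0 unfolding N_def by auto
          hence "\<not> (f x \<noteq> f y0 \<and> dist_nat (f x) (f y0) > 1)"
            using x unfolding wadj_def by auto
          thus "p \<in> {f y0 - 1, f y0, Suc (f y0)}" using x unfolding dist_nat_def
            by (auto split: if_splits)
        qed
        have "inj_on f {x\<in>U i. w (f x) = a}"
          by (rule inj_on_subset[OF injf]) (use UV i in blast)
        hence "card {x\<in>U i. w (f x) = a} = card (f ` {x\<in>U i. w (f x) = a})"
          by (simp add: card_image)
        also have "\<dots> \<le> card {f y0 - 1, f y0, Suc (f y0)}"
          by (rule card_mono[OF _ sub]) simp
        also have "\<dots> \<le> 3" by (simp add: card_insert_if)
        finally show ?thesis .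
      qed
      have "U i = (\<Union>a\<in>UNIV. {x\<in>U i. w (f x) = a})" by auto
      hence "card (U i) \<le> (\<Sum>a\<in>UNIV. card {x\<in>U i. w (f x) = a})"
        using card_UN_le[of "UNIV::'a set" "\<lambda>a. {x\<in>U i. w (f x) = a}"] by simp
      also have "\<dots> \<le> (\<Sum>a\<in>(UNIV::'a set). 3)" by (rule sum_mono) (rule bound)
      also have "\<dots> = 3 * card (UNIV::'a set)" by simp
      finally show False using ck by simp
    qed
  qed
  hence "\<forall>i\<in>{..<n}. \<exists>a. \<forall>x\<in>U i. nbhd G x \<inter> X = N a" by blast
  from bchoice[OF this] obtain g where g: "\<forall>i\<in>{..<n}. \<forall>x\<in>U i. nbhd G x \<inter> X = N (g i)" by blast
  have "inj_on g {..<n}"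
  proof (rule inj_onI)
    fix i j assume ij: "i \<in> {..<n}" "j \<in> {..<n}" "g i = g j"
    show "i = j"
    proof (rule ccontr)
      assume "i \<noteq> j"
      have "card (U i) \<ge> 1" "card (U j) \<ge> 1" using A ij by auto
      hence "U i \<noteq> {}" "U j \<noteq> {}" by auto
      then obtain x y where "x \<in> U i" "y \<in> U j" by blast
      note xy = this
      have "nbhd G x \<inter> X \<noteq> nbhd G y \<inter> X" using diff ij xy \<open>i \<noteq> j\<close> by blast
      moreover have "nbhd G x \<inter> X = N (g i)" "nbhd G y \<inter> X = N (g j)" using g ij xy by blast+
      ultimately show False using ij by simp
    qed
  qed
  hence "card {..<n} \<le> card (UNIV :: 'a set)" by (rule card_inj_on_le) auto
  thus "n \<le> card (UNIV::'a set)" by simp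
qed

end
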